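(* Let $Q=\{\bm{x}\in\mathbb{R}^n: A\bm{x}\le\bm{b},\ B\bm{x}\le\bm{d}\}$ be a polytope, where all entries of the matrix $A$ are non-negative and all entries of the matrix $B$ are non-positive, and circuits of $Q$ are taken with respect to this system. Then every circuit $\bm{c}\in\mathbb{R}^n$ of $Q$ with $\bm{c}\ge\bm{0}$ or $\bm{c}\le\bm{0}$ has exactly one non-zero coordinate.
   Context: Circuits: for a polytope $P=\{\bm{x}: D\bm{x}\le \bm{f}\}$ given by a fixed linear system, a nonzero vector $\bm{g}$ is a circuit of $P$ if $\operatorname{supp}(D\bm{g})$ is inclusion-minimal among the sets $\operatorname{supp}(D\bm{y})$ with $\bm{y}\neq\bm{0}$. Here $D$ is the matrix obtained by stacking $A$ over $B$. *)

theory Defs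
  imports "HOL-Analysis.Analysis"
begin

text \<open>Support of the stacked vector D y, where D is A stacked over B.
  Rows of A are tagged Inl, rows of B are tagged Inr.\<close>
definition stacked_supp ::
  "real^'n^'m1 \<Rightarrow> real^'n^'m2 \<Rightarrow> real^'n \<Rightarrow> ('m1 + 'm2) set" where
  "stacked_supp A B y =
     Inl ` {i. (A *v y) $ i \<noteq> 0} \<union> Inr ` {j. (B *v y) $ j \<noteq> 0}"

definition is_circuit ::
  "real^'n^'m1 \<Rightarrow> real^'n^'m2 \<Rightarrow> real^'n \<Rightarrow> bool" where
  "is_circuit A B g \<longleftrightarrow> g \<noteq> 0 \<and>
     \<not> (\<exists>y. y \<noteq> 0 \<and> stacked_supp A B y \<subset> stacked_supp A B g)"

end

theory Submission
  imports Defs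
begin

definition dv :: "real^'n^'m1 \<Rightarrow> real^'n^'m2 \<Rightarrow> real^'n \<Rightarrow> ('m1 + 'm2) \<Rightarrow> real" where
  "dv A B y r = (case r of Inl i \<Rightarrow> (A *v y) $ i | Inr j \<Rightarrow> (B *v y) $ j)"

lemma supp_dv: "r \<in> stacked_supp A B y \<longleftrightarrow> dv A B y r \<noteq> 0"
  unfolding stacked_supp_def dv_def by (cases r) auto

lemma dv_lin: "dv A B (a *s y - b *s z) r = a * dv A B y r - b * dv A B z r"
  unfolding dv_def by (cases r) (auto simp: matrix_vector_mult_diff_distrib vector_scalar_commute)

lemma supp_neg: "stacked_supp A B (- y) = stacked_supp A B y"
  unfolding stacked_supp_def by (simp add: vec.neg)

lemma axis_mult: "(M *v axis k (1::real)) $ i = M $ i $ k"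
  by (simp add: matrix_vector_mult_basis column_def)

lemma nonneg_mult:
  fixes M :: "real^'n^'m" and c :: "real^'n"
  assumes "\<forall>i k. M $ i $ k \<ge> 0" "\<forall>k. c $ k \<ge> 0" "c $ k \<noteq> 0" "M $ i $ k \<noteq> 0"
  shows "(M *v c) $ i > 0"
proof -
  have "(M *v c) $ i = (\<Sum>l\<in>UNIV. M $ i $ l * c $ l)" by (simp add: matrix_vector_mult_def)
  also have "\<dots> \<ge> M $ i $ k * c $ k"
    by (rule member_le_sum) (use assms in auto)
  finally show ?thesis using assms
    by (smt (verit) mult_pos_pos)
qed

lemma supp_axis_sub:
  fixes A :: "real^'n^'m1" and B :: "real^'n^'m2" and c :: "real^'n"
  assumes "\<forall>i k. A $ i $ k \<ge> 0" "\<forall>j k. B $ j $ k \<le> 0" "\<forall>k. c $ k \<ge> 0" "c $ k \<noteq> 0"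
  shows "stacked_supp A B (axis k 1) \<subseteq> stacked_supp A B c"
proof
  fix r assume "r \<in> stacked_supp A B (axis k 1)"
  then show "r \<in> stacked_supp A B c"
  proof (cases r)
    case (Inl i)
    with \<open>r \<in> _\<close> have "A $ i $ k \<noteq> 0" by (auto simp: stacked_supp_def axis_mult)
    then have "(A *v c) $ i > 0" using nonneg_mult[OF assms(1,3,4)] by blast
    then show ?thesis using Inl by (auto simp: stacked_supp_def)
  next
    case (Inr j)
    with \<open>r \<in> _\<close> have "(-B) $ j $ k \<noteq> 0" by (auto simp: stacked_supp_def axis_mult)
    moreover have "\<forall>j k. (-B) $ j $ k \<ge> 0" using assms(2) by simp
    ultimately have "((-B) *v c) $ j > 0" using nonneg_mult assms(3,4) by blast
    then have "(B *v c) $ j \<noteq> 0"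
      by (simp add: matrix_vector_mult_def sum_negf)
    then show ?thesis using Inr by (auto simp: stacked_supp_def)
  qed
qed

theorem lemma1:
  fixes A :: "real^'n^'m1" and B :: "real^'n^'m2"
    and b :: "real^'m1" and d :: "real^'m2" and c :: "real^'n"
  assumes "Q = {x. (\<forall>i. (A *v x) $ i \<le> b $ i) \<and> (\<forall>j. (B *v x) $ j \<le> d $ j)}"
    and "polytope Q" and "Q \<noteq> {}"
    and "\<forall>i k. A $ i $ k \<ge> 0"
    and "\<forall>j k. B $ j $ k \<le> 0"
    and "is_circuit A B c"
    and "(\<forall>k. c $ k \<ge> 0) \<or> (\<forall>k. c $ k \<le> 0)"
  shows "\<exists>!k. c $ k \<noteq> 0"
proof -
  have ker: "v = 0" if "stacked_supp A B v = {}" for v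
  proof (rule ccontr)
    assume nz: "v \<noteq> 0"
    have Av: "A *v v = 0" "B *v v = 0" using that
      by (auto simp: stacked_supp_def vec_eq_iff)
    obtain x where x: "x \<in> Q" using assms(3) by blast
    have inQ: "x + t *s v \<in> Q" for t
      using x assms(1) by (simp add: matrix_vector_right_distrib vector_scalar_commute Av)
    have "bounded Q" using polytope_imp_compact[OF assms(2)] compact_imp_bounded by blast
    then obtain M where M: "\<And>y. y \<in> Q \<Longrightarrow> norm y \<le> M" by (auto simp: bounded_iff)
    define t where "t = (M + norm x + 1) / norm v"
    have nv: "norm v > 0" using nz by simp
    have "norm (t *s v) = t * norm v"
    proof -
      have "M + norm x + 1 > 0" using M[OF x] norm_ge_zero[of x] by linarith
      then show ?thesis using nv by (simp add: t_def scalar_mult_eq_scaleR)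
    qed
    also have "\<dots> = M + norm x + 1" using nv by (simp add: t_def)
    finally have "norm (t *s v) = M + norm x + 1" .
    moreover have "norm (t *s v) \<le> norm (x + t *s v) + norm x"
      by (metis add_diff_cancel_left' norm_triangle_ineq4 add.commute)
    moreover have "norm (x + t *s v) \<le> M" using M[OF inQ] .
    ultimately show False by linarith
  qed
  obtain c' where c': "c' = c \<or> c' = - c" "\<forall>k. c' $ k \<ge> 0"
    using assms(7) by (metis neg_0_le_iff_le vector_uminus_component)
  have suppc: "stacked_supp A B c' = stacked_supp A B c" using c' supp_neg by metis
  have nz: "c $ k \<noteq> 0 \<longleftrightarrow> c' $ k \<noteq> 0" for k using c'(1) by auto
  have cnz: "c \<noteq> 0" and minc: "\<not> (\<exists>y. y \<noteq> 0 \<and> stacked_supp A B y \<subset> stacked_supp A B c)"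
    using assms(6) by (auto simp: is_circuit_def)
  have eq: "stacked_supp A B (axis k 1) = stacked_supp A B c" if "c $ k \<noteq> 0" for k
  proof -
    have "stacked_supp A B (axis k 1) \<subseteq> stacked_supp A B c"
      using supp_axis_sub[OF assms(4,5) c'(2)] nz that suppc by metis
    moreover have "axis k (1::real) \<noteq> 0" by (simp add: axis_eq_0_iff)
    ultimately show ?thesis using minc by blast
  qed
  obtain k where k: "c $ k \<noteq> 0" using cnz by (metis vec_eq_iff zero_index)
  show ?thesis
  proof (rule ex1I[of _ k])
    show "c $ k \<noteq> 0" by fact
  next
    fix l assume l: "c $ l \<noteq> 0"
    show "l = k"
    proof (rule ccontr)
      assume lk: "l \<noteq> k"
      let ?T = "stacked_supp A B c"
      have Tk: "stacked_supp A B (axis k 1) = ?T" and Tl: "stacked_supp A B (axis l 1) = ?T"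
        using eq k l by auto
      have "axis k (1::real) \<noteq> 0" by (simp add: axis_eq_0_iff)
      then have "?T \<noteq> {}" using ker Tk by metis
      then obtain r where r: "r \<in> ?T" by blast
      define p where "p = dv A B (axis k 1) r"
      define q where "q = dv A B (axis l 1) r"
      have p: "p \<noteq> 0" using r Tk supp_dv p_def by metis
      have q: "q \<noteq> 0" using r Tl supp_dv q_def by metis
      define y where "y = q *s axis k 1 - p *s axis l (1::real)"
      have "y $ k = q" using lk by (simp add: y_def axis_def)
      then have ynz: "y \<noteq> 0" using q by auto
      have "stacked_supp A B y \<subseteq> ?T - {r}"
      proof
        fix s assume s: "s \<in> stacked_supp A B y"
        then have ds: "q * dv A B (axis k 1) s - p * dv A B (axis l 1) s \<noteq> 0"
          using supp_dv dv_lin y_def by metis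
        have "s \<noteq> r" using ds p_def q_def by auto
        moreover have "s \<in> ?T"
        proof (rule ccontr)
          assume "s \<notin> ?T"
          then have "dv A B (axis k 1) s = 0" "dv A B (axis l 1) s = 0"
            using Tk Tl supp_dv by metis+
          then show False using ds by simp
        qed
        ultimately show "s \<in> ?T - {r}" by blast
      qed
      then have "stacked_supp A B y \<subset> ?T" using r by blast
      then show False using minc ynz by blast
    qed
  qed
qed

end
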